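(* Let $G$ be a graph. For any two maximum matchings $F, F'$ of $G$ we have $\nu(G\setminus F')\le 2\,\nu(G\setminus F)$. Consequently $L(G)\le 2\,l(G)$.
   Context: Graphs are finite, undirected, without loops or multiple edges. $\nu(G)$ denotes the maximum size of a matching of $G$; a matching is maximum if it has $\nu(G)$ edges. For $F\subseteq E(G)$, $G\setminus F$ is the graph with vertex set $V(G)$ and edge set $E(G)\setminus F$. Define $L(G)=\max\{\nu(G\setminus F): F \text{ a maximum matching of } G\}$ and $l(G)=\min\{\nu(G\setminus F): F \text{ a maximum matching of } G\}$. *)

theory Defs
  imports Main
begin

definition graph :: "'a set \<Rightarrow> 'a set set \<Rightarrow> bool" where
  "graph V E \<longleftrightarrow> finite V \<and> (\<forall>e\<in>E. \<exists>u v. e = {u, v} \<and> u \<noteq> v \<and> u \<in> V \<and> v \<in> V)"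

definition matching :: "'a set \<Rightarrow> 'a set set \<Rightarrow> 'a set set \<Rightarrow> bool" where
  "matching V E M \<longleftrightarrow> M \<subseteq> E \<and> (\<forall>e1\<in>M. \<forall>e2\<in>M. e1 \<noteq> e2 \<longrightarrow> e1 \<inter> e2 = {})"

definition nu :: "'a set \<Rightarrow> 'a set set \<Rightarrow> nat" where
  "nu V E = Max (card ` {M. matching V E M})"

definition max_matching :: "'a set \<Rightarrow> 'a set set \<Rightarrow> 'a set set \<Rightarrow> bool" where
  "max_matching V E M \<longleftrightarrow> matching V E M \<and> card M = nu V E"

definition L_max :: "'a set \<Rightarrow> 'a set set \<Rightarrow> nat" where
  "L_max V E = Max ((\<lambda>F. nu V (E - F)) ` {F. max_matching V E F})"

definition l_min :: "'a set \<Rightarrow> 'a set set \<Rightarrow> nat" where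
  "l_min V E = Min ((\<lambda>F. nu V (E - F)) ` {F. max_matching V E F})"

end

theory Submission
  imports Defs
begin

lemma graph_finE: "graph V E \<Longrightarrow> finite E"
proof -
  assume g: "graph V E"
  have "E \<subseteq> Pow V" using g unfolding graph_def by fastforce
  moreover have "finite V" using g unfolding graph_def by fastforce
  ultimately show ?thesis by (simp add: finite_subset)
qed

lemma match_fin: "finite E \<Longrightarrow> finite {M. matching V E M}"
  by (rule finite_subset[of _ "Pow E"]) (auto simp: matching_def)

lemma nu_ge: "finite E \<Longrightarrow> matching V E M \<Longrightarrow> card M \<le> nu V E"
  unfolding nu_def using match_fin by (intro Max_ge) auto

lemma nu_att: "finite E \<Longrightarrow> \<exists>M. matching V E M \<and> card M = nu V E"
proof -
  assume f: "finite E"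
  have "{} \<in> {M. matching V E M}" by (simp add: matching_def)
  hence "nu V E \<in> card ` {M. matching V E M}" unfolding nu_def
    using match_fin[OF f] by (intro Max_in) auto
  thus ?thesis by auto
qed

lemma part1:
  assumes f: "finite E" and F: "max_matching V E F" and F': "max_matching V E F'"
  shows "nu V (E - F') \<le> 2 * nu V (E - F)"
proof -
  have fd: "finite (E - F')" using f by simp
  obtain M where M: "matching V (E - F') M" "card M = nu V (E - F')"
    using nu_att[OF fd] by blast
  have "M \<subseteq> E - F'" using M(1) unfolding matching_def by simp
  hence fM: "finite M" using fd by (rule finite_subset)
  have "F \<subseteq> E" using F unfolding max_matching_def matching_def by simp
  hence fF1: "finite F" using f by (rule finite_subset)
  have "F' \<subseteq> E" using F' unfolding max_matching_def matching_def by simp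
  hence fF2: "finite F'" using f by (rule finite_subset)
  note fF = fF1 fF2
  have fdF: "finite (E - F)" using f by simp
  have m1: "matching V (E - F) (M - F)"
    using M(1) unfolding matching_def by blast
  have c1: "card (M - F) \<le> nu V (E - F)" by (rule nu_ge[OF fdF m1])
  have m2: "matching V (E - F) (F' - F)"
    using F' unfolding max_matching_def matching_def by blast
  have c2: "card (F' - F) \<le> nu V (E - F)" by (rule nu_ge[OF fdF m2])
  have eq: "card F = card F'" using F F' by (simp add: max_matching_def)
  have "card (F - F') = card F - card (F \<inter> F')" using fF by (simp add: card_Diff_subset_Int)
  moreover have "card (F' - F) = card F' - card (F \<inter> F')" using fF
    by (simp add: card_Diff_subset_Int Int_commute)
  ultimately have c3: "card (F - F') = card (F' - F)" using eq by simp
  have "M \<inter> F \<subseteq> F - F'" using M(1) by (auto simp: matching_def)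
  hence c4: "card (M \<inter> F) \<le> card (F - F')" using fF by (intro card_mono) auto
  have "card M = card (M - F) + card (M \<inter> F)" using fM
    by (simp add: card_Int_Diff[of M F])
  thus ?thesis using M(2) c1 c2 c3 c4 by linarith
qed

theorem theorem2:
  fixes V :: "'a set" and E :: "'a set set"
  assumes "graph V E"
  shows "(\<forall>F F'. max_matching V E F \<and> max_matching V E F' \<longrightarrow>
            nu V (E - F') \<le> 2 * nu V (E - F))
         \<and> L_max V E \<le> 2 * l_min V E"
proof -
  have f: "finite E" using graph_finE[OF assms] .
  have P1: "\<forall>F F'. max_matching V E F \<and> max_matching V E F' \<longrightarrow>
            nu V (E - F') \<le> 2 * nu V (E - F)" using part1[OF f] by blast
  let ?S = "(\<lambda>F. nu V (E - F)) ` {F. max_matching V E F}"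
  have fin: "finite {F. max_matching V E F}"
    by (rule finite_subset[OF _ match_fin[OF f]]) (auto simp: max_matching_def)
  obtain F0 where "matching V E F0" "card F0 = nu V E" using nu_att[OF f] by blast
  hence ne: "{F. max_matching V E F} \<noteq> {}" by (auto simp: max_matching_def)
  have "L_max V E \<in> ?S" unfolding L_max_def using fin ne by (intro Max_in) auto
  then obtain A where A: "max_matching V E A" "L_max V E = nu V (E - A)" by auto
  have "l_min V E \<in> ?S" unfolding l_min_def using fin ne by (intro Min_in) auto
  then obtain B where B: "max_matching V E B" "l_min V E = nu V (E - B)" by auto
  show ?thesis using P1 A B by auto
qed

end
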